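(* For every preference profile $P$, every Pareto-optimal assignment belongs to the top cycle, i.e. $\mathit{PO}(P)\subseteq \mathit{TC}(P)$.
   Context: Let $N=\{1,\dots,n\}$ be agents and $H$ a set of $n$ houses. A profile $P=(\succ_1,\dots,\succ_n)$ gives each agent a strict linear order on $H$. An assignment is a bijection $\mu:N\to H$; $M$ is the set of all assignments. Agent $x$ weakly prefers $\mu$ to $\lambda$ if $\mu(x)\succ_x\lambda(x)$ or $\mu(x)=\lambda(x)$, strictly if $\mu(x)\succ_x\lambda(x)$. $N_{\mu,\lambda}$ is the set of agents weakly preferring $\mu$ to $\lambda$; $\mu\succsim\lambda$ if $|N_{\mu,\lambda}|\ge|N_{\lambda,\mu}|$, and $\succsim^*$ is the transitive closure of $\succsim$. The top cycle is $\mathit{TC}(P)=\{\mu\in M:\mu\succsim^*\lambda\text{ for all }\lambda\in M\}$. $\mu$ Pareto-dominates $\lambda$ if all agents weakly prefer $\mu$ to $\lambda$ and some agent strictly; $\mathit{PO}(P)$ is the set of assignments not Pareto-dominated by any assignment. *)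

theory Defs
  imports Main "HOL-Library.FuncSet"
begin

text \<open>Agents N and houses H are finite sets of equal cardinality.
  A profile assigns to each agent x a strict preference relation P x on houses,
  where P x h h' means h is strictly preferred to h' by x.\<close>

definition strict_linear_order_on :: "'h set \<Rightarrow> ('h \<Rightarrow> 'h \<Rightarrow> bool) \<Rightarrow> bool" where
  "strict_linear_order_on H R \<longleftrightarrow>
     (\<forall>a\<in>H. \<not> R a a) \<and>
     (\<forall>a\<in>H. \<forall>b\<in>H. \<forall>c\<in>H. R a b \<longrightarrow> R b c \<longrightarrow> R a c) \<and>
     (\<forall>a\<in>H. \<forall>b\<in>H. a \<noteq> b \<longrightarrow> R a b \<or> R b a)"

definition profile :: "'a set \<Rightarrow> 'h set \<Rightarrow> ('a \<Rightarrow> 'h \<Rightarrow> 'h \<Rightarrow> bool) \<Rightarrow> bool" where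
  "profile N H P \<longleftrightarrow> (\<forall>x\<in>N. strict_linear_order_on H (P x))"

definition assignments :: "'a set \<Rightarrow> 'h set \<Rightarrow> ('a \<Rightarrow> 'h) set" where
  "assignments N H = {\<mu>. bij_betw \<mu> N H \<and> \<mu> \<in> extensional N}"

definition weakly_prefers :: "('a \<Rightarrow> 'h \<Rightarrow> 'h \<Rightarrow> bool) \<Rightarrow> 'a \<Rightarrow> ('a \<Rightarrow> 'h) \<Rightarrow> ('a \<Rightarrow> 'h) \<Rightarrow> bool" where
  "weakly_prefers P x \<mu> \<nu> \<longleftrightarrow> P x (\<mu> x) (\<nu> x) \<or> \<mu> x = \<nu> x"

definition strictly_prefers :: "('a \<Rightarrow> 'h \<Rightarrow> 'h \<Rightarrow> bool) \<Rightarrow> 'a \<Rightarrow> ('a \<Rightarrow> 'h) \<Rightarrow> ('a \<Rightarrow> 'h) \<Rightarrow> bool" where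
  "strictly_prefers P x \<mu> \<nu> \<longleftrightarrow> P x (\<mu> x) (\<nu> x)"

definition weak_supporters :: "'a set \<Rightarrow> ('a \<Rightarrow> 'h \<Rightarrow> 'h \<Rightarrow> bool) \<Rightarrow> ('a \<Rightarrow> 'h) \<Rightarrow> ('a \<Rightarrow> 'h) \<Rightarrow> 'a set" where
  "weak_supporters N P \<mu> \<nu> = {x\<in>N. weakly_prefers P x \<mu> \<nu>}"

definition maj :: "'a set \<Rightarrow> 'h set \<Rightarrow> ('a \<Rightarrow> 'h \<Rightarrow> 'h \<Rightarrow> bool) \<Rightarrow> (('a \<Rightarrow> 'h) \<times> ('a \<Rightarrow> 'h)) set" where
  "maj N H P = {(\<mu>, \<nu>). \<mu> \<in> assignments N H \<and> \<nu> \<in> assignments N H \<and>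
       card (weak_supporters N P \<mu> \<nu>) \<ge> card (weak_supporters N P \<nu> \<mu>)}"

definition top_cycle :: "'a set \<Rightarrow> 'h set \<Rightarrow> ('a \<Rightarrow> 'h \<Rightarrow> 'h \<Rightarrow> bool) \<Rightarrow> ('a \<Rightarrow> 'h) set" where
  "top_cycle N H P = {\<mu> \<in> assignments N H. \<forall>\<nu> \<in> assignments N H. (\<mu>, \<nu>) \<in> (maj N H P)\<^sup>+}"

definition pareto_dominates :: "'a set \<Rightarrow> ('a \<Rightarrow> 'h \<Rightarrow> 'h \<Rightarrow> bool) \<Rightarrow> ('a \<Rightarrow> 'h) \<Rightarrow> ('a \<Rightarrow> 'h) \<Rightarrow> bool" where
  "pareto_dominates N P \<mu> \<nu> \<longleftrightarrow>
     (\<forall>x\<in>N. weakly_prefers P x \<mu> \<nu>) \<and> (\<exists>x\<in>N. strictly_prefers P x \<mu> \<nu>)"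

definition pareto_optimal :: "'a set \<Rightarrow> 'h set \<Rightarrow> ('a \<Rightarrow> 'h \<Rightarrow> 'h \<Rightarrow> bool) \<Rightarrow> ('a \<Rightarrow> 'h) set" where
  "pareto_optimal N H P = {\<mu> \<in> assignments N H. \<not> (\<exists>\<nu> \<in> assignments N H. pareto_dominates N P \<nu> \<mu>)}"

end

theory Submission
  imports Defs
begin

lemma swap_assign:
  assumes s: "s \<in> assignments N H" and x: "x \<in> N" and y: "y \<in> N"
  shows "(\<lambda>z. if z = x then s y else if z = y then s x else s z) \<in> assignments N H"
proof -
  let ?t = "\<lambda>z. if z = x then s y else if z = y then s x else s z"
  have b: "bij_betw s N H" and e: "s \<in> extensional N" using s by (auto simp: assignments_def)
  have inj: "inj_on s N" using b by (simp add: bij_betw_def)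
  have "inj_on ?t N" using inj x y unfolding inj_on_def by (smt (verit))
  moreover have "?t ` N = H"
  proof
    show "?t ` N \<subseteq> H" using b x y by (auto simp: bij_betw_def)
    show "H \<subseteq> ?t ` N"
    proof
      fix h assume "h \<in> H"
      then obtain z where z: "z \<in> N" "s z = h" using b by (auto simp: bij_betw_def)
      show "h \<in> ?t ` N"
      proof (cases "z = x")
        case True thus ?thesis using z y by (intro image_eqI[of _ _ y]) auto
      next
        case False
        show ?thesis
        proof (cases "z = y")
          case True thus ?thesis using z x by (intro image_eqI[of _ _ x]) auto
        next
          case f2: False thus ?thesis using z False by (intro image_eqI[of _ _ z]) auto
        qed
      qed
    qed
  qed
  moreover have "?t \<in> extensional N" using e x y by (auto simp: extensional_def)
  ultimately show ?thesis by (simp add: assignments_def bij_betw_def)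
qed

lemma maj_refl: "\<mu> \<in> assignments N H \<Longrightarrow> (\<mu>, \<mu>) \<in> maj N H P"
  by (simp add: maj_def)

lemma main:
  assumes fin: "finite N" and prof: "profile N H P"
    and mu: "\<mu> \<in> pareto_optimal N H P"
  shows "\<And>s. s \<in> assignments N H \<Longrightarrow> card {z\<in>N. s z \<noteq> \<mu> z} = k \<Longrightarrow> (\<mu>, s) \<in> (maj N H P)\<^sup>+"
proof (induction k rule: less_induct)
  case (less k s)
  have muA: "\<mu> \<in> assignments N H" and nodom: "\<not> (\<exists>\<nu> \<in> assignments N H. pareto_dominates N P \<nu> \<mu>)"
    using mu by (auto simp: pareto_optimal_def)
  have bmu: "bij_betw \<mu> N H" and emu: "\<mu> \<in> extensional N" using muA by (auto simp: assignments_def)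
  have bs: "bij_betw s N H" and es: "s \<in> extensional N" using less.prems by (auto simp: assignments_def)
  have slo: "\<And>x. x \<in> N \<Longrightarrow> strict_linear_order_on H (P x)" using prof by (simp add: profile_def)
  show ?case
  proof (cases "s = \<mu>")
    case True thus ?thesis using muA maj_refl by blast
  next
    case False
    then obtain x0 where "s x0 \<noteq> \<mu> x0" by blast
    then have x0: "x0 \<in> N" using es emu by (metis extensional_arb)
    have "\<exists>x\<in>N. P x (\<mu> x) (s x)"
    proof (rule ccontr)
      assume nx: "\<not> ?thesis"
      have "\<forall>x\<in>N. weakly_prefers P x s \<mu>"
      proof
        fix x assume xN: "x \<in> N"
        have "\<mu> x \<in> H" "s x \<in> H" using xN bmu bs by (auto simp: bij_betw_def)
        then show "weakly_prefers P x s \<mu>" using slo[OF xN] nx xN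
          unfolding weakly_prefers_def strict_linear_order_on_def by blast
      qed
      moreover have "strictly_prefers P x0 s \<mu>"
      proof -
        have "\<mu> x0 \<in> H" "s x0 \<in> H" using x0 bmu bs by (auto simp: bij_betw_def)
        then show ?thesis using slo[OF x0] nx x0 \<open>s x0 \<noteq> \<mu> x0\<close>
          unfolding strictly_prefers_def strict_linear_order_on_def by metis
      qed
      ultimately have "pareto_dominates N P s \<mu>" using x0 by (auto simp: pareto_dominates_def)
      then show False using nodom less.prems(1) by blast
    qed
    then obtain x where xN: "x \<in> N" and px: "P x (\<mu> x) (s x)" by blast
    have mxH: "\<mu> x \<in> H" "s x \<in> H" using xN bmu bs by (auto simp: bij_betw_def)
    have sxmx: "s x \<noteq> \<mu> x" using px slo[OF xN] mxH unfolding strict_linear_order_on_def by metis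
    obtain y where yN: "y \<in> N" and sy: "s y = \<mu> x" using mxH bs by (metis bij_betw_def imageE)
    have xy: "x \<noteq> y" using sy sxmx by auto
    define t where "t = (\<lambda>z. if z = x then s y else if z = y then s x else s z)"
    have tA: "t \<in> assignments N H" unfolding t_def by (rule swap_assign[OF less.prems(1) xN yN])
    have mymx: "\<mu> y \<noteq> \<mu> x" using bmu xy xN yN by (metis bij_betw_def inj_on_def)
    have sub: "{z\<in>N. t z \<noteq> \<mu> z} \<subseteq> {z\<in>N. s z \<noteq> \<mu> z} - {x}"
      using sy xy mymx by (auto simp: t_def)
    have xin: "x \<in> {z\<in>N. s z \<noteq> \<mu> z}" using xN sxmx by auto
    have lt: "card {z\<in>N. t z \<noteq> \<mu> z} < k"
    proof -
      have "card {z\<in>N. t z \<noteq> \<mu> z} \<le> card ({z\<in>N. s z \<noteq> \<mu> z} - {x})"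
        using sub fin by (intro card_mono) auto
      also have "\<dots> < card {z\<in>N. s z \<noteq> \<mu> z}" using xin fin by (intro card_Diff1_less) auto
      finally show ?thesis using less.prems(2) by simp
    qed
    have IH: "(\<mu>, t) \<in> (maj N H P)\<^sup>+" using less.IH[OF lt tA refl] .
    have asym: "\<not> P x (s x) (\<mu> x)" using px slo[OF xN] mxH unfolding strict_linear_order_on_def by metis
    let ?A = "weak_supporters N P t s" and ?B = "weak_supporters N P s t"
    have xA: "x \<in> ?A" using xN px sy by (simp add: weak_supporters_def weakly_prefers_def t_def)
    have BA: "?B \<subseteq> insert y (?A - {x})"
      using asym sxmx sy xy by (auto simp: weak_supporters_def weakly_prefers_def t_def)
    have finA: "finite ?A" using fin by (simp add: weak_supporters_def)
    have "card ?B \<le> card (insert y (?A - {x}))" using BA finA by (intro card_mono) auto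
    also have "\<dots> \<le> card (?A - {x}) + 1" by (simp add: card_insert_if finA)
    also have "\<dots> = card ?A" using xA finA by (metis Suc_eq_plus1 card_Suc_Diff1)
    finally have "(t, s) \<in> maj N H P" using tA less.prems(1) by (simp add: maj_def)
    with IH show ?thesis by (rule trancl_into_trancl)
  qed
qed

theorem proposition4p3:
  fixes N :: "'a set" and H :: "'h set" and P :: "'a \<Rightarrow> 'h \<Rightarrow> 'h \<Rightarrow> bool"
  assumes "finite N" and "finite H" and "card N = card H"
    and "profile N H P"
  shows "pareto_optimal N H P \<subseteq> top_cycle N H P"
proof
  fix \<mu> assume mu: "\<mu> \<in> pareto_optimal N H P"
  then have "\<mu> \<in> assignments N H" by (simp add: pareto_optimal_def)
  moreover have "\<forall>\<nu> \<in> assignments N H. (\<mu>, \<nu>) \<in> (maj N H P)\<^sup>+"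
    using main[OF assms(1) assms(4) mu] by blast
  ultimately show "\<mu> \<in> top_cycle N H P" by (simp add: top_cycle_def)
qed

end
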